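(* For every $n\ge3$, $\mathrm{PSR}_n(n-2)=\mathrm{StoRec}_n$.
   Context: $K_n^0$ is the complete graph on vertex set $\{0,1,\dots,n\}$ with sink $0$; every vertex has degree $n$. A configuration is $c\in\mathbb{Z}_{\ge0}^n$, stable if $c_i\le n-1$ for all $i$; $c^{\max}=(n-1,\dots,n-1)$. A deterministic toppling of an unstable vertex $i$ sends one grain to each neighbour (grains sent to the sink disappear). A stochastic toppling (parameter $p\in(0,1)$) of an unstable vertex $i$ sends, independently for each incident edge, one grain along it with probability $p$, else keeps it. For $k\in\{0,\dots,n\}$, the $k$-partial SSM on $K_n^0$ is the model in which vertices $1,\dots,k$ topple stochastically and vertices $k+1,\dots,n$ topple deterministically; its Markov chain on stable configurations adds a grain at vertex $i$ with probability $\mu_i>0$ and then stabilises. $\mathrm{PSR}_n(k)$ is its set of recurrent states; equivalently, the stable configurations reachable from $c^{\max}$ by a finite sequence of grain additions and topplings of unstable vertices in which vertices $k+1,\dots,n$ topple deterministically and vertices $1,\dots,k$ send one grain along each edge of an arbitrary subset of their incident edges. $\mathrm{StoRec}_n=\mathrm{PSR}_n(n)$ is the set of recurrent states of the SSM (all vertices topple stochastically). *)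

theory Defs
  imports Main
begin

text \<open>Configurations on the non-sink vertices 1..n of K_n^0 (vertex set {0,...,n}, sink 0),
  represented as functions nat => nat that are 0 outside {1..n}.\<close>

type_synonym config = "nat \<Rightarrow> nat"

definition cmax :: "nat \<Rightarrow> config" where
  "cmax n = (\<lambda>j. if j \<in> {1..n} then n - 1 else 0)"

definition stable :: "nat \<Rightarrow> config \<Rightarrow> bool" where
  "stable n c \<longleftrightarrow> (\<forall>i\<in>{1..n}. c i \<le> n - 1)"

definition add_grain :: "config \<Rightarrow> nat \<Rightarrow> config" where
  "add_grain c i = c(i := c i + 1)"

text \<open>Vertex i sends one grain along each edge {i,j} with j in S (S a subset of the
  neighbours {0..n} - {i}); grains sent to the sink 0 disappear.\<close>
definition send_along :: "nat \<Rightarrow> config \<Rightarrow> nat \<Rightarrow> nat set \<Rightarrow> config" where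
  "send_along n c i S =
     (\<lambda>j. if j = i then c i - card S
          else if j \<in> S \<inter> {1..n} then c j + 1 else c j)"

inductive psr_step :: "nat \<Rightarrow> nat \<Rightarrow> config \<Rightarrow> config \<Rightarrow> bool" for n k where
  add: "i \<in> {1..n} \<Longrightarrow> psr_step n k c (add_grain c i)"
| det: "i \<in> {k+1..n} \<Longrightarrow> c i \<ge> n \<Longrightarrow>
        psr_step n k c (send_along n c i ({0..n} - {i}))"
| sto: "i \<in> {1..k} \<Longrightarrow> c i \<ge> n \<Longrightarrow> S \<subseteq> {0..n} - {i} \<Longrightarrow>
        psr_step n k c (send_along n c i S)"

definition PSR :: "nat \<Rightarrow> nat \<Rightarrow> config set" where
  "PSR n k = {c. (psr_step n k)\<^sup>*\<^sup>* (cmax n) c \<and> stable n c}"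

definition StoRec :: "nat \<Rightarrow> config set" where
  "StoRec n = PSR n n"

end

theory Submission
  imports Defs
begin

lemma step_mono: "psr_step n (n-2) c c' \<Longrightarrow> psr_step n n c c'"
proof (induction rule: psr_step.induct)
  case (add i c) then show ?case by (rule psr_step.add)
next
  case (det i c) then show ?case by (intro psr_step.sto) auto
next
  case (sto i c S) then show ?case by (intro psr_step.sto) auto
qed

lemma star_mono: "(psr_step n (n-2))\<^sup>*\<^sup>* c c' \<Longrightarrow> (psr_step n n)\<^sup>*\<^sup>* c c'"
proof -
  have "psr_step n (n-2) \<le> psr_step n n" using step_mono by blast
  then have "(psr_step n (n-2))\<^sup>*\<^sup>* \<le> (psr_step n n)\<^sup>*\<^sup>*" by (rule rtranclp_mono)
  then show "(psr_step n (n-2))\<^sup>*\<^sup>* c c' \<Longrightarrow> (psr_step n n)\<^sup>*\<^sup>* c c'" by blast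
qed

definition zout :: "nat \<Rightarrow> config \<Rightarrow> bool" where
  "zout n c \<longleftrightarrow> (\<forall>j. j \<notin> {1..n} \<longrightarrow> c j = 0)"

definition condV :: "nat set \<Rightarrow> config \<Rightarrow> bool" where
  "condV V c \<longleftrightarrow> (\<forall>A \<subseteq> V. card A * (card A - 1) \<le> 2 * sum c A)"

lemma send_along_val: "send_along n c i S j =
   (if j = i then c i - card S else if j \<in> S \<and> 1 \<le> j \<and> j \<le> n then c j + 1 else c j)"
  unfolding send_along_def by auto

lemma cond_mono: "condV V c \<Longrightarrow> (\<forall>j\<in>V. c j \<le> d j) \<Longrightarrow> condV V d"
  unfolding condV_def
proof (intro allI impI)
  fix A assume h: "\<forall>A\<subseteq>V. card A * (card A - 1) \<le> 2 * sum c A" "\<forall>j\<in>V. c j \<le> d j" "A \<subseteq> V"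
  then have "sum c A \<le> sum d A" by (intro sum_mono) auto
  moreover have "card A * (card A - 1) \<le> 2 * sum c A" using h by blast
  ultimately show "card A * (card A - 1) \<le> 2 * sum d A" by linarith
qed

lemma sum_indicator_card: "finite A \<Longrightarrow> (\<Sum>j\<in>A. (if j \<in> S then 1 else 0::nat)) = card (A \<inter> S)"
  by (simp add: sum.If_cases)

lemma arith_aux:
  fixes x s ci m sc :: nat
  assumes "x * (x - 1) \<le> 2 * sc" "x + s \<le> ci + m" "s \<le> n" "n \<le> ci"
  shows "(x + 1) * (x + 1 - 1) \<le> 2 * (ci - s) + 2 * sc + 2 * m"
proof -
  have "(x + 1) * (x + 1 - 1) = x * (x - 1) + 2 * x" by (cases x) auto
  then show ?thesis using assms by linarith
qed

lemma topple_cond: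
  assumes cond: "condV {1..n} c" and i: "i \<in> {1..n}" and ci: "c i \<ge> n"
    and S: "S \<subseteq> {0..n} - {i}"
  shows "condV {1..n} (send_along n c i S)"
  unfolding condV_def
proof (intro allI impI)
  fix A assume A: "A \<subseteq> {1..n}"
  let ?c' = "send_along n c i S"
  have finA: "finite A" using A finite_subset by blast
  show "card A * (card A - 1) \<le> 2 * sum ?c' A"
  proof (cases "i \<in> A")
    case False
    have "sum c A \<le> sum ?c' A"
      by (rule sum_mono) (use False in \<open>auto simp: send_along_val\<close>)
    moreover have "card A * (card A - 1) \<le> 2 * sum c A" using cond A unfolding condV_def by blast
    ultimately show ?thesis by linarith
  next
    case True
    define A' where "A' = A - {i}"
    have finA': "finite A'" using finA A'_def by auto
    have cardA: "card A = card A' + 1" using True finA A'_def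
      by (metis Suc_eq_plus1 card_Suc_Diff1)
    have sumA: "sum ?c' A = ?c' i + sum ?c' A'"
      using True finA A'_def by (simp add: sum.remove)
    have ci': "?c' i = c i - card S" by (simp add: send_along_val)
    have pw: "?c' j = c j + (if j \<in> S then 1 else 0)" if "j \<in> A'" for j
    proof -
      have jA: "j \<in> A" and "j \<noteq> i" using that unfolding A'_def by auto
      moreover have "j \<in> {1..n}" using A jA by blast
      ultimately have "j \<noteq> i" "1 \<le> j" "j \<le> n" by auto
      then show ?thesis by (simp add: send_along_val)
    qed
    have "sum ?c' A' = (\<Sum>j\<in>A'. c j + (if j \<in> S then 1 else 0))"
      using pw by (rule sum.cong[OF refl])
    also have "\<dots> = sum c A' + card (A' \<inter> S)"
      using finA' by (simp add: sum.distrib sum_indicator_card)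
    finally have sA': "sum ?c' A' = sum c A' + card (A' \<inter> S)" .
    have "A' \<subseteq> {1..n}" using A A'_def by auto
    then have condA': "card A' * (card A' - 1) \<le> 2 * sum c A'"
      using cond unfolding condV_def by blast
    have finS: "finite S" using S finite_subset by blast
    have cS: "card S = card (S \<inter> A') + card (S - A')"
      using finS by (rule card_Int_Diff)
    have "S - A' \<subseteq> ({0..n} - {i}) - A'" using S by auto
    then have "card (S - A') \<le> card (({0..n} - {i}) - A')" by (intro card_mono) auto
    also have "\<dots> = n - card A'"
    proof -
      have "A' \<subseteq> {0..n} - {i}" using A A'_def by auto
      then have "card (({0..n} - {i}) - A') = card ({0..n} - {i}) - card A'"
        using finA' by (simp add: card_Diff_subset)
      moreover have "card ({0..n} - {i}) = n" using i by simp
      ultimately show ?thesis by simp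
    qed
    finally have cSA: "card (S - A') \<le> n - card A'" .
    have "card A' \<le> n" using A A'_def True i
    proof -
      have "A' \<subseteq> {1..n} - {i}" using A A'_def by auto
      then have "card A' \<le> card ({1..n} - {i})" by (intro card_mono) auto
      then show ?thesis using i by simp
    qed
    have cSn: "card S \<le> n"
    proof -
      have "card S \<le> card ({0..n} - {i})" using S by (intro card_mono) auto
      then show ?thesis using i by simp
    qed
    have key: "card A' + card S \<le> c i + card (A' \<inter> S)"
    proof -
      have "card (A' \<inter> S) = card (S \<inter> A')" by (simp add: Int_commute)
      then show ?thesis using cS cSA ci \<open>card A' \<le> n\<close> by linarith
    qed
    have e2: "2 * sum ?c' A = 2*(c i - card S) + 2*sum c A' + 2*card (A' \<inter> S)"
      using sumA ci' sA' by simp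
    show ?thesis
      unfolding e2 cardA using arith_aux[OF condA' key cSn ci] by simp
  qed
qed

lemma zout_add: "zout n c \<Longrightarrow> i \<in> {1..n} \<Longrightarrow> zout n (add_grain c i)"
  unfolding zout_def add_grain_def by auto

lemma zout_send: "zout n c \<Longrightarrow> i \<in> {1..n} \<Longrightarrow> zout n (send_along n c i S)"
  unfolding zout_def by (auto simp: send_along_val)

lemma zout_cond_step:
  assumes "psr_step n k c c'" "k \<le> n" "zout n c" "condV {1..n} c"
  shows "zout n c' \<and> condV {1..n} c'"
  using assms
proof (induction rule: psr_step.induct)
  case (add i c)
  have "\<forall>j\<in>{1..n}. c j \<le> add_grain c i j" unfolding add_grain_def by simp
  then show ?case using add zout_add cond_mono by blast
next
  case (det i c)
  have i: "i \<in> {1..n}" using det by simp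
  show ?case using det zout_send[OF _ i] topple_cond[OF _ i] by blast
next
  case (sto i c S)
  have i: "i \<in> {1..n}" using sto by simp
  show ?case using sto zout_send[OF _ i] topple_cond[OF _ i] by blast
qed

lemma cmax_cond: "zout n (cmax n) \<and> condV {1..n} (cmax n)"
proof
  show "zout n (cmax n)" unfolding zout_def cmax_def by simp
  show "condV {1..n} (cmax n)" unfolding condV_def
  proof (intro allI impI)
    fix A :: "nat set" assume A: "A \<subseteq> {1..n}"
    have "sum (cmax n) A = (\<Sum>j\<in>A. n - 1)"
      by (rule sum.cong[OF refl]) (use A in \<open>auto simp: cmax_def\<close>)
    also have "\<dots> = card A * (n - 1)" by simp
    finally have s: "sum (cmax n) A = card A * (n - 1)" .
    have "card A \<le> n" using card_mono[OF _ A] by simp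
    then have "card A - 1 \<le> n - 1" by simp
    then have "card A * (card A - 1) \<le> card A * (n - 1)" by (rule mult_left_mono) simp
    then show "card A * (card A - 1) \<le> 2 * sum (cmax n) A" using s by linarith
  qed
qed

lemma reach_inv:
  assumes "(psr_step n n)\<^sup>*\<^sup>* (cmax n) c"
  shows "zout n c \<and> condV {1..n} c"
  using assms
proof (induction rule: rtranclp_induct)
  case base then show ?case using cmax_cond by blast
next
  case (step y z) then show ?case using zout_cond_step[of n n y z] by blast
qed

lemma add_many: "i \<in> {1..n} \<Longrightarrow> (psr_step n k)\<^sup>*\<^sup>* c (c(i := c i + m))"
proof (induction m)
  case 0 then show ?case by simp
next
  case (Suc m)
  have "psr_step n k (c(i := c i + m)) (add_grain (c(i := c i + m)) i)"
    using Suc.prems by (rule psr_step.add)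
  moreover have "add_grain (c(i := c i + m)) i = c(i := c i + Suc m)"
    unfolding add_grain_def by simp
  ultimately show ?case using Suc by (metis rtranclp.rtrancl_into_rtrancl)
qed

lemma upward:
  assumes "zout n c" "zout n d" "\<forall>j\<in>{1..n}. c j \<le> d j"
  shows "(psr_step n k)\<^sup>*\<^sup>* c d"
proof -
  define e where "e N = (\<lambda>j. if j \<in> {1..N} then d j else c j)" for N
  have "N \<le> n \<Longrightarrow> (psr_step n k)\<^sup>*\<^sup>* c (e N)" for N
  proof (induction N)
    case 0
    have "e 0 = c" unfolding e_def by auto
    then show ?case by simp
  next
    case (Suc N)
    have i: "Suc N \<in> {1..n}" using Suc.prems by simp
    have "e (Suc N) = (e N)(Suc N := e N (Suc N) + (d (Suc N) - c (Suc N)))"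
      using assms(3) i unfolding e_def by (auto simp: fun_eq_iff)
    then show ?case using Suc add_many[OF i, of k "e N"]
      by (metis Suc_leD rtranclp_trans)
  qed
  moreover have "e n = d" using assms(1,2) unfolding e_def zout_def by (auto simp: fun_eq_iff)
  ultimately show ?thesis by force
qed

lemma dump:
  assumes u: "u \<in> {1..k}" "k \<le> n"
  shows "c u = n + m \<Longrightarrow> (psr_step n k)\<^sup>*\<^sup>* c (c(u := n))"
proof (induction m arbitrary: c)
  case 0 then show ?case by (metis add_0_right fun_upd_triv rtranclp.rtrancl_refl)
next
  case (Suc m)
  have st: "psr_step n k c (send_along n c u {0})"
    by (rule psr_step.sto) (use u Suc.prems in auto)
  have eq: "send_along n c u {0} = c(u := n + m)"
    using Suc.prems by (auto simp: fun_eq_iff send_along_val)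
  have "(psr_step n k)\<^sup>*\<^sup>* (c(u := n + m)) ((c(u := n + m))(u := n))"
    by (rule Suc.IH) simp
  then show ?case using st eq by (metis converse_rtranclp_into_rtranclp fun_upd_upd)
qed

lemma dump': "u \<in> {1..k} \<Longrightarrow> k \<le> n \<Longrightarrow> c u \<ge> n \<Longrightarrow> (psr_step n k)\<^sup>*\<^sup>* c (c(u := n))"
  using dump[of u k n c "c u - n"] by simp

lemma phase1:
  assumes n: "n \<ge> 3" and ab: "a \<noteq> b" "a \<in> {n-1, n}" "b \<in> {n-1, n}"
  shows "\<exists>P. (psr_step n (n-2))\<^sup>*\<^sup>* (cmax n) P \<and> zout n P \<and> (\<forall>x\<in>{1..n-2}. P x \<ge> n)
             \<and> P a = 1 \<and> P b = 0"
proof -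
  define c1 where "c1 = add_grain (cmax n) 1"
  define c2 where "c2 = send_along n c1 1 {0, a}"
  define c3 where "c3 = send_along n c2 a ({0..n} - {a})"
  define c4 where "c4 = send_along n c3 b ({0..n} - {b})"
  have a1: "a \<noteq> 1" "a \<ge> 1" "a \<le> n" "a > n - 2" using ab n by auto
  have b1: "b \<noteq> 1" "b \<ge> 1" "b \<le> n" "b > n - 2" using ab n by auto
  have s1: "psr_step n (n-2) (cmax n) c1" unfolding c1_def by (rule psr_step.add) (use n in auto)
  have c1_1: "c1 1 = n" unfolding c1_def add_grain_def cmax_def using n by simp
  have c1_o: "c1 j = cmax n j" if "j \<noteq> 1" for j unfolding c1_def add_grain_def using that by simp
  have s2: "psr_step n (n-2) c1 c2" unfolding c2_def
    by (rule psr_step.sto) (use n a1 c1_1 in auto)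
  have card2: "card {0::nat, a} = 2" using a1 by simp
  have c2a: "c2 a = n" unfolding c2_def using a1 c1_o[of a] n by (simp add: send_along_val cmax_def)
  have c2x: "c2 x \<ge> n - 2" if "x \<in> {1..n-2}" for x
  proof (cases "x = 1")
    case True then show ?thesis unfolding c2_def using c1_1 card2 n by (simp add: send_along_val)
  next
    case False then show ?thesis unfolding c2_def using that c1_o[of x] a1
      by (simp add: send_along_val cmax_def)
  qed
  have c2b: "c2 b = n - 1" unfolding c2_def using a1 b1 ab c1_o[of b] n by (simp add: send_along_val cmax_def)
  have cardD: "card ({0..n} - {i}) = n" if "i \<le> n" for i using that by simp
  have s3: "psr_step n (n-2) c2 c3" unfolding c3_def
    by (rule psr_step.det) (use n a1 c2a in auto)
  have c3a: "c3 a = 0" unfolding c3_def using c2a cardD[of a] a1 by (simp add: send_along_val)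
  have c3b: "c3 b = n" unfolding c3_def using c2b ab b1 n by (simp add: send_along_val)
  have c3x: "c3 x \<ge> n - 1" if "x \<in> {1..n-2}" for x
  proof -
    have "x \<noteq> a" "x \<le> n" using that a1 by auto
    then have "c3 x = c2 x + 1" unfolding c3_def using that by (simp add: send_along_val)
    then show ?thesis using c2x[OF that] n by simp
  qed
  have s4: "psr_step n (n-2) c3 c4" unfolding c4_def
    by (rule psr_step.det) (use n b1 c3b in auto)
  have c4b: "c4 b = 0" unfolding c4_def using c3b cardD[of b] b1 by (simp add: send_along_val)
  have c4a: "c4 a = 1" unfolding c4_def using c3a ab a1 by (simp add: send_along_val)
  have c4x: "c4 x \<ge> n" if "x \<in> {1..n-2}" for x
  proof -
    have "x \<noteq> b" "x \<le> n" using that b1 by auto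
    then have "c4 x = c3 x + 1" unfolding c4_def using that by (simp add: send_along_val)
    then show ?thesis using c3x[OF that] by simp
  qed
  have z: "zout n c4"
  proof -
    have "zout n (cmax n)" using cmax_cond by blast
    then have "zout n c1" unfolding c1_def by (rule zout_add) (use n in auto)
    then have "zout n c2" unfolding c2_def by (rule zout_send) (use n in auto)
    then have "zout n c3" unfolding c3_def by (rule zout_send) (use a1 in auto)
    then show "zout n c4" unfolding c4_def by (rule zout_send) (use b1 in auto)
  qed
  have "(psr_step n (n-2))\<^sup>*\<^sup>* (cmax n) c4"
    using s1 s2 s3 s4 by (meson converse_rtranclp_into_rtranclp rtranclp.rtrancl_refl)
  then show ?thesis using z c4x c4a c4b by blast
qed

definition tourn :: "nat set \<Rightarrow> (nat \<Rightarrow> nat \<Rightarrow> bool) \<Rightarrow> bool" where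
  "tourn V R \<longleftrightarrow> (\<forall>u w. R u w \<longrightarrow> u \<in> V \<and> w \<in> V \<and> u \<noteq> w)
      \<and> (\<forall>u\<in>V. \<forall>w\<in>V. u \<noteq> w \<longrightarrow> R u w \<or> R w u) \<and> (\<forall>u w. R u w \<longrightarrow> \<not> R w u)"

definition Tset :: "nat \<Rightarrow> (nat \<Rightarrow> nat \<Rightarrow> bool) \<Rightarrow> nat \<Rightarrow> nat set" where
  "Tset n R u = insert 0 ({w \<in> {1..n}. R u w} \<union> {w. u < w \<and> w \<le> n - 2})"

definition inv2 :: "nat \<Rightarrow> (nat \<Rightarrow> nat \<Rightarrow> bool) \<Rightarrow> nat \<Rightarrow> config \<Rightarrow> bool" where
  "inv2 n R u C \<longleftrightarrow> zout n C \<and> (\<forall>x\<in>{1..n}. x \<le> n - 2 \<and> u \<le> x \<longrightarrow> C x \<ge> n)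
     \<and> (\<forall>x\<in>{1..n}. \<not> (x \<le> n - 2 \<and> u \<le> x) \<longrightarrow>
           C x + card {w \<in> {1..n-2}. u \<le> w \<and> R w x} = card {w \<in> {1..n}. R w x})"

lemma Tset_sub: "tourn {1..n} R \<Longrightarrow> 1 \<le> u \<Longrightarrow> Tset n R u \<subseteq> {0..n} - {u}"
  unfolding Tset_def tourn_def by auto

lemma Tset_card:
  assumes t: "tourn {1..n} R" and u: "1 \<le> u" "u \<le> n - 2"
  shows "card (Tset n R u) + card {w \<in> {1..n}. R w u} = n + card {w \<in> {1..n-2}. u + 1 \<le> w \<and> R w u}"
proof -
  define Out where "Out = {w \<in> {1..n}. R u w}"
  define In where "In = {w \<in> {1..n}. R w u}"
  define Lt where "Lt = {w. u < w \<and> w \<le> n - 2}"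
  define L where "L = {w \<in> {1..n-2}. u + 1 \<le> w \<and> R w u}"
  have tt: "\<forall>u w. R u w \<longrightarrow> u \<in> {1..n} \<and> w \<in> {1..n} \<and> u \<noteq> w"
    "\<forall>x\<in>{1..n}. \<forall>w\<in>{1..n}. x \<noteq> w \<longrightarrow> R x w \<or> R w x" "\<forall>x w. R x w \<longrightarrow> \<not> R w x"
    using t unfolding tourn_def by blast+
  have fO: "finite Out" unfolding Out_def by simp
  have fL: "finite Lt" unfolding Lt_def by (rule finite_subset[of _ "{..n-2}"]) auto
  have LtO: "Lt - Out = L"
  proof
    show "Lt - Out \<subseteq> L"
    proof
      fix w assume w: "w \<in> Lt - Out"
      then have "w \<in> {1..n}" "w \<noteq> u" "\<not> R u w" using u unfolding Lt_def Out_def by auto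
      moreover have "u \<in> {1..n}" using u by auto
      ultimately have "R w u" using tt(2) by blast
      then show "w \<in> L" using w u unfolding L_def Lt_def by auto
    qed
    show "L \<subseteq> Lt - Out"
    proof
      fix w assume w: "w \<in> L"
      then have "R w u" unfolding L_def by simp
      then have "\<not> R u w" using tt(3) by blast
      then show "w \<in> Lt - Out" using w unfolding L_def Lt_def Out_def by auto
    qed
  qed
  have c1: "card (Out \<union> Lt) = card Out + card L"
  proof -
    have "Out \<union> Lt = Out \<union> (Lt - Out)" by blast
    moreover have "card (Out \<union> (Lt - Out)) = card Out + card (Lt - Out)"
      by (rule card_Un_disjoint) (use fO fL in auto)
    ultimately show ?thesis using LtO by simp
  qed
  have c0: "card (Tset n R u) = 1 + card (Out \<union> Lt)"
  proof -
    have "0 \<notin> Out \<union> Lt" unfolding Out_def Lt_def by auto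
    moreover have "Tset n R u = insert 0 (Out \<union> Lt)" unfolding Tset_def Out_def Lt_def by simp
    ultimately show ?thesis using fO fL by simp
  qed
  have c2: "card Out + card In = n - 1"
  proof -
    have "Out \<union> In = {1..n} - {u}"
    proof
      show "Out \<union> In \<subseteq> {1..n} - {u}" unfolding Out_def In_def using tt(1) by auto
      have "u \<in> {1..n}" using u by auto
      then show "{1..n} - {u} \<subseteq> Out \<union> In" unfolding Out_def In_def using tt(2) by blast
    qed
    moreover have "Out \<inter> In = {}" unfolding Out_def In_def using tt(3) by auto
    moreover have "finite In" unfolding In_def by simp
    ultimately have "card Out + card In = card ({1..n} - {u})" using fO by (metis card_Un_disjoint)
    then show ?thesis using u by simp
  qed
  have "n \<ge> 1" using u by simp
  then show ?thesis using c0 c1 c2 unfolding In_def[symmetric] L_def[symmetric] by simp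
qed

lemma inv2_step:
  assumes t: "tourn {1..n} R" and u: "1 \<le> u" "u \<le> n - 2" and I: "inv2 n R u C"
  shows "\<exists>C'. (psr_step n (n-2))\<^sup>*\<^sup>* C C' \<and> inv2 n R (u + 1) C'"
proof -
  have tt: "\<forall>u w. R u w \<longrightarrow> u \<in> {1..n} \<and> w \<in> {1..n} \<and> u \<noteq> w"
    "\<forall>x\<in>{1..n}. \<forall>w\<in>{1..n}. x \<noteq> w \<longrightarrow> R x w \<or> R w x" "\<forall>x w. R x w \<longrightarrow> \<not> R w x"
    using t unfolding tourn_def by blast+
  have I1: "zout n C" and I2: "\<forall>x\<in>{1..n}. x \<le> n - 2 \<and> u \<le> x \<longrightarrow> C x \<ge> n"
    and I3: "\<forall>x\<in>{1..n}. \<not> (x \<le> n - 2 \<and> u \<le> x) \<longrightarrow>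
           C x + card {w \<in> {1..n-2}. u \<le> w \<and> R w x} = card {w \<in> {1..n}. R w x}"
    using I unfolding inv2_def by blast+
  define D where "D = C(u := n)"
  define C' where "C' = send_along n D u (Tset n R u)"
  have Cu: "C u \<ge> n" using I2 u by auto
  have s1: "(psr_step n (n-2))\<^sup>*\<^sup>* C D" unfolding D_def by (rule dump') (use u Cu in auto)
  have TS: "Tset n R u \<subseteq> {0..n} - {u}" using Tset_sub[OF t u(1)] .
  have s2: "psr_step n (n-2) D C'" unfolding C'_def
    by (rule psr_step.sto) (use u TS in \<open>auto simp: D_def\<close>)
  have cardT: "card (Tset n R u) \<le> n"
  proof -
    have "card (Tset n R u) \<le> card ({0..n} - {u})" using TS by (intro card_mono) auto
    then show ?thesis using u by simp
  qed
  have z: "zout n C'" unfolding C'_def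
    by (rule zout_send) (use I1 u in \<open>auto simp: D_def zout_def\<close>)
  have A2: "\<forall>x\<in>{1..n}. x \<le> n - 2 \<and> u + 1 \<le> x \<longrightarrow> C' x \<ge> n"
  proof (intro ballI impI)
    fix x assume x: "x \<in> {1..n}" "x \<le> n - 2 \<and> u + 1 \<le> x"
    have "C' x \<ge> D x" unfolding C'_def using x by (simp add: send_along_val)
    moreover have "D x = C x" unfolding D_def using x by simp
    ultimately show "C' x \<ge> n" using I2 x by fastforce
  qed
  have A3: "C' x + card {w \<in> {1..n-2}. u + 1 \<le> w \<and> R w x} = card {w \<in> {1..n}. R w x}"
    if x: "x \<in> {1..n}" "\<not> (x \<le> n - 2 \<and> u + 1 \<le> x)" for x
  proof (cases "x = u")
    case True
    have "C' x = n - card (Tset n R u)" unfolding C'_def True by (simp add: send_along_val D_def)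
    then show ?thesis using Tset_card[OF t u] cardT True by simp
  next
    case False
    have nu: "\<not> (x \<le> n - 2 \<and> u \<le> x)" using x False by auto
    have memT: "x \<in> Tset n R u \<longleftrightarrow> R u x" unfolding Tset_def using x nu by auto
    have "C' x = C x + (if R u x then 1 else 0)"
      unfolding C'_def using False x memT by (simp add: send_along_val D_def)
    moreover have "card {w \<in> {1..n-2}. u \<le> w \<and> R w x}
        = (if R u x then 1 else 0) + card {w \<in> {1..n-2}. u + 1 \<le> w \<and> R w x}"
    proof -
      have e1: "{w \<in> {1..n-2}. u \<le> w \<and> R w x} =
          {w \<in> {1..n-2}. w = u \<and> R w x} \<union> {w \<in> {1..n-2}. u + 1 \<le> w \<and> R w x}"
        by auto
      have e2: "{w \<in> {1..n-2}. w = u \<and> R w x} = (if R u x then {u} else {})"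
        using u by auto
      have e: "{w \<in> {1..n-2}. u \<le> w \<and> R w x} =
          (if R u x then {u} else {}) \<union> {w \<in> {1..n-2}. u + 1 \<le> w \<and> R w x}"
        using e1 e2 by simp
      show ?thesis unfolding e by (cases "R u x") auto
    qed
    moreover have "C x + card {w \<in> {1..n-2}. u \<le> w \<and> R w x} = card {w \<in> {1..n}. R w x}"
      using I3 x(1) nu by blast
    ultimately show ?thesis by simp
  qed
  have "inv2 n R (u + 1) C'" unfolding inv2_def using z A2 A3 by blast
  then show ?thesis using s1 s2 by (meson rtranclp.rtrancl_into_rtrancl)
qed

lemma inv2_run:
  assumes t: "tourn {1..n} R"
  shows "inv2 n R u C \<Longrightarrow> 1 \<le> u \<Longrightarrow> u \<le> n - 1 \<Longrightarrow>
     \<exists>C'. (psr_step n (n-2))\<^sup>*\<^sup>* C C' \<and> inv2 n R (n - 1) C'"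
proof (induction "n - 1 - u" arbitrary: u C)
  case 0
  then have "u = n - 1" by simp
  then show ?case using 0 by blast
next
  case (Suc m)
  have u2: "u \<le> n - 2" using Suc by linarith
  obtain C1 where C1: "(psr_step n (n-2))\<^sup>*\<^sup>* C C1" "inv2 n R (u + 1) C1"
    using inv2_step[OF t Suc.prems(2) u2 Suc.prems(1)] by blast
  have "\<exists>C'. (psr_step n (n-2))\<^sup>*\<^sup>* C1 C' \<and> inv2 n R (n - 1) C'"
    using Suc.hyps(1)[of "u+1" C1] Suc.hyps(2) Suc.prems C1 u2 by auto
  then show ?case using C1 by (meson rtranclp_trans)
qed

lemma init_inv:
  assumes n: "n \<ge> 3" and t: "tourn {1..n} R" and ab: "a \<noteq> b" "a \<in> {n-1, n}" "b \<in> {n-1, n}"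
    and Rba: "R b a"
  shows "\<exists>P. (psr_step n (n-2))\<^sup>*\<^sup>* (cmax n) P \<and> inv2 n R 1 P"
proof -
  obtain P where P: "(psr_step n (n-2))\<^sup>*\<^sup>* (cmax n) P" "zout n P" "\<forall>x\<in>{1..n-2}. P x \<ge> n"
    "P a = 1" "P b = 0" using phase1[OF n ab] by blast
  have tt: "\<forall>u w. R u w \<longrightarrow> u \<in> {1..n} \<and> w \<in> {1..n} \<and> u \<noteq> w"
    "\<forall>x w. R x w \<longrightarrow> \<not> R w x"
    using t unfolding tourn_def by blast+
  have nab: "\<not> R a b" using Rba tt(2) by blast
  have sa: "{w \<in> {1..n}. R w a} = insert b {w \<in> {1..n-2}. 1 \<le> w \<and> R w a}"
  proof
    show "{w \<in> {1..n}. R w a} \<subseteq> insert b {w \<in> {1..n-2}. 1 \<le> w \<and> R w a}"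
    proof
      fix w assume w: "w \<in> {w \<in> {1..n}. R w a}"
      then have "w \<noteq> a" using tt(1) by blast
      then show "w \<in> insert b {w \<in> {1..n-2}. 1 \<le> w \<and> R w a}" using w ab by auto
    qed
    show "insert b {w \<in> {1..n-2}. 1 \<le> w \<and> R w a} \<subseteq> {w \<in> {1..n}. R w a}"
      using Rba ab n by auto
  qed
  have sb: "{w \<in> {1..n}. R w b} = {w \<in> {1..n-2}. 1 \<le> w \<and> R w b}"
  proof
    show "{w \<in> {1..n}. R w b} \<subseteq> {w \<in> {1..n-2}. 1 \<le> w \<and> R w b}"
    proof
      fix w assume w: "w \<in> {w \<in> {1..n}. R w b}"
      then have "w \<noteq> b" using tt(1) by blast
      moreover have "w \<noteq> a" using w nab by blast
      ultimately show "w \<in> {w \<in> {1..n-2}. 1 \<le> w \<and> R w b}" using w ab by auto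
    qed
    show "{w \<in> {1..n-2}. 1 \<le> w \<and> R w b} \<subseteq> {w \<in> {1..n}. R w b}" by auto
  qed
  have bnot: "b \<notin> {w \<in> {1..n-2}. 1 \<le> w \<and> R w a}" using ab n by auto
  have "inv2 n R 1 P" unfolding inv2_def
  proof (intro conjI ballI impI)
    show "zout n P" using P(2) .
    fix x assume x: "x \<in> {1..n}"
    { assume "x \<le> n - 2 \<and> 1 \<le> x" then show "n \<le> P x" using P(3) by auto }
    { assume nx: "\<not> (x \<le> n - 2 \<and> 1 \<le> x)"
      then have "x = a \<or> x = b" using x ab by auto
      then show "P x + card {w \<in> {1..n - 2}. 1 \<le> w \<and> R w x} = card {w \<in> {1..n}. R w x}"
      proof
        assume "x = a" then show ?thesis using sa bnot P(4) by simp
      next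
        assume "x = b" then show ?thesis using sb P(5) by simp
      qed }
  qed
  then show ?thesis using P(1) by blast
qed

lemma tourn_reach:
  assumes n: "n \<ge> 3" and t: "tourn {1..n} R"
  shows "\<exists>C. (psr_step n (n-2))\<^sup>*\<^sup>* (cmax n) C \<and> zout n C \<and> (\<forall>x\<in>{1..n}. C x = card {w \<in> {1..n}. R w x})"
proof -
  have "\<exists>P. (psr_step n (n-2))\<^sup>*\<^sup>* (cmax n) P \<and> inv2 n R 1 P"
  proof (cases "R n (n-1)")
    case True
    show ?thesis by (rule init_inv[OF n t, of "n-1" n]) (use n True in auto)
  next
    case False
    have tot: "\<forall>u\<in>{1..n}. \<forall>w\<in>{1..n}. u \<noteq> w \<longrightarrow> R u w \<or> R w u"
      using t unfolding tourn_def by blast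
    have "n - 1 \<in> {1..n}" "n \<in> {1..n}" "n - 1 \<noteq> n" using n by auto
    then have "R (n-1) n" using tot False by blast
    then show ?thesis by (rule init_inv[OF n t, of n "n-1", rotated 3]) (use n in auto)
  qed
  then obtain P where P: "(psr_step n (n-2))\<^sup>*\<^sup>* (cmax n) P" "inv2 n R 1 P" by blast
  obtain C where C: "(psr_step n (n-2))\<^sup>*\<^sup>* P C" "inv2 n R (n-1) C"
  proof -
    have "1 \<le> n - 1" using n by simp
    then show ?thesis using inv2_run[OF t P(2)] that by blast
  qed
  have z: "zout n C" using C(2) unfolding inv2_def by blast
  have "\<forall>x\<in>{1..n}. C x = card {w \<in> {1..n}. R w x}"
  proof
    fix x assume x: "x \<in> {1..n}"
    have e: "{w \<in> {1..n-2}. n - 1 \<le> w \<and> R w x} = {}" using n by auto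
    have "\<not> (x \<le> n - 2 \<and> n - 1 \<le> x)" using n by auto
    then have "C x + card {w \<in> {1..n-2}. n - 1 \<le> w \<and> R w x} = card {w \<in> {1..n}. R w x}"
      using C(2) x unfolding inv2_def by blast
    then show "C x = card {w \<in> {1..n}. R w x}" unfolding e by simp
  qed
  then show ?thesis using P(1) C(1) z by (meson rtranclp_trans)
qed

lemma arithA_nat:
  fixes b t sB q r :: nat
  assumes "(b+1)*(b+1-1) \<le> 2*(t+sB)" "t \<le> r" "b = q + r"
  shows "b*(b-1) + 2*q \<le> 2*sB"
proof -
  define X where "X = b*(b-1)"
  define Y where "Y = (b+1)*(b+1-1)"
  have "Y = X + 2*b" unfolding X_def Y_def by (cases b) auto
  then have "X + 2*q \<le> 2*sB" using assms unfolding Y_def[symmetric] by arith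
  then show ?thesis unfolding X_def .
qed

lemma arithB_nat:
  fixes b t q r p M sBI sBD sIB :: nat
  assumes b: "b = q + r" and t: "t = r + p" and p: "1 \<le> p" and q: "1 \<le> q"
    and h1: "r*(r-1) \<le> 2*sBI" and h2: "q*M \<le> sBD" and h3: "sIB \<le> p*M"
    and h4: "(b+p+1)*(b+p+1-1) \<le> 2*(t + (sBI + sBD + sIB))"
  shows "b*(b-1) + 2*q \<le> 2*(sBI+sBD)"
proof -
  obtain p' where p': "p = Suc p'" using p by (cases p) auto
  obtain q' where q': "q = Suc q'" using q by (cases q) auto
  define X where "X = b*(b-1)"
  define Y where "Y = (b+p+1)*(b+p+1-1)"
  define Z where "Z = r*(r-1)"
  define W where "W = p*(p-1)"
  have "X + 2*q \<le> 2*(sBI+sBD)"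
  proof (cases "2*r+q+1 \<le> 2*M")
    case True
    have m: "q*(2*r+q+1) \<le> q*(2*M)" using True by (rule mult_left_mono) simp
    have m2: "q*(2*M) = 2*(q*M)" by simp
    have e: "X + 2*q = Z + q*(2*r+q+1)"
      unfolding X_def Z_def b q' by (cases r) (simp_all add: algebra_simps)
    show ?thesis using e m m2 h1 h2 unfolding Z_def[symmetric] by arith
  next
    case False
    then have "2*M \<le> 2*r+q" by simp
    then have m: "p*(2*M) \<le> p*(2*r+q)" by (rule mult_left_mono) simp
    have m2: "p*(2*M) = 2*(p*M)" by simp
    have e: "Y = X + 2*q + 2*t + p*(2*r+q) + W + p*q"
      unfolding X_def Y_def W_def b t p' q' by (simp add: algebra_simps)
    show ?thesis using e m m2 h3 h4 unfolding Y_def[symmetric] by arith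
  qed
  then show ?thesis unfolding X_def .
qed

lemma argmin_nat: "finite X \<Longrightarrow> X \<noteq> {} \<Longrightarrow> \<exists>m\<in>X. \<forall>y\<in>X. (c::nat \<Rightarrow> nat) m \<le> c y"
proof -
  assume f: "finite X" and ne: "X \<noteq> {}"
  have "Min (c ` X) \<in> c ` X" using f ne by simp
  then obtain m where m: "m \<in> X" "c m = Min (c ` X)" by auto
  have "\<forall>y\<in>X. c m \<le> c y" using m(2) f by simp
  then show ?thesis using m(1) by blast
qed

lemma exists_small:
  assumes f: "finite V'"
  shows "t \<le> card V' \<Longrightarrow> \<exists>I \<subseteq> V'. card I = t \<and> (\<forall>x\<in>I. \<forall>y\<in>V'-I. (c::nat\<Rightarrow>nat) x \<le> c y)"
proof (induction t)
  case 0 then show ?case by (intro exI[of _ "{}"]) auto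
next
  case (Suc t)
  then obtain I where I: "I \<subseteq> V'" "card I = t" "\<forall>x\<in>I. \<forall>y\<in>V'-I. c x \<le> c y" by auto
  have "V' - I \<noteq> {}"
  proof
    assume "V' - I = {}"
    then have "V' = I" using I(1) by blast
    then show False using I(2) Suc.prems by simp
  qed
  moreover have "finite (V' - I)" using f by simp
  ultimately obtain m where m: "m \<in> V' - I" "\<forall>y\<in>V' - I. c m \<le> c y"
    using argmin_nat by blast
  have fI: "finite I" using I(1) f finite_subset by blast
  have "insert m I \<subseteq> V'" using I(1) m(1) by blast
  moreover have "card (insert m I) = Suc t" using fI m(1) I(2) by simp
  moreover have "\<forall>x\<in>insert m I. \<forall>y\<in>V' - insert m I. c x \<le> c y" using I(3) m(2) by blast
  ultimately show ?case by blast
qed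

lemma landau:
  "finite V \<Longrightarrow> condV V c \<Longrightarrow> \<exists>R. tourn V R \<and> (\<forall>x\<in>V. card {u\<in>V. R u x} \<le> c x)"
proof (induction "card V" arbitrary: V c rule: less_induct)
  case less
  show ?case
  proof (cases "V = {}")
    case True
    show ?thesis by (rule exI[of _ "\<lambda>_ _. False"]) (simp add: tourn_def True)
  next
    case False
    have fV: "finite V" and cV: "\<forall>A\<subseteq>V. card A * (card A - 1) \<le> 2 * sum c A"
      using less.prems unfolding condV_def by blast+
    obtain v where v: "v \<in> V" "\<forall>u\<in>V. c v \<le> c u" using argmin_nat[OF fV False] by blast
    define t where "t = c v"
    define V' where "V' = V - {v}"
    have fV': "finite V'" using fV V'_def by simp
    have cardV: "card V = Suc (card V')" using fV v(1) V'_def by (metis card_Suc_Diff1)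
    define tt where "tt = min t (card V')"
    obtain I where I: "I \<subseteq> V'" "card I = tt" "\<forall>x\<in>I. \<forall>y\<in>V'-I. c x \<le> c y"
      using exists_small[OF fV', of tt c] tt_def by auto
    have fI: "finite I" using I(1) fV' finite_subset by blast
    have vV': "v \<notin> V'" unfolding V'_def by simp
    have pos: "c x \<ge> 1" if x: "x \<in> V'" for x
    proof (rule ccontr)
      assume "\<not> c x \<ge> 1"
      then have cx: "c x = 0" by simp
      then have cv: "c v = 0" using v(2) x V'_def by force
      have xv: "x \<noteq> v" using x vV' by blast
      have "{x, v} \<subseteq> V" using x v(1) V'_def by blast
      then have "card {x,v} * (card {x,v} - 1) \<le> 2 * sum c {x,v}" using cV by blast
      then show False using xv cx cv by simp
    qed
    define c' where "c' u = (if u \<in> I then c u else c u - 1)" for u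
    have cond': "condV V' c'" unfolding condV_def
    proof (intro allI impI)
      fix B assume B: "B \<subseteq> V'"
      have fB: "finite B" using B fV' finite_subset by blast
      define q where "q = card (B - I)"
      define r where "r = card (B \<inter> I)"
      define b where "b = card B"
      define sBI where "sBI = sum c (B \<inter> I)"
      define sBD where "sBD = sum c (B - I)"
      have b_eq: "b = r + q" unfolding b_def r_def q_def using fB by (rule card_Int_Diff)
      have sB: "sum c B = sBI + sBD" unfolding sBI_def sBD_def using fB by (rule sum.Int_Diff)
      have s'1: "sum c' (B \<inter> I) = sBI" unfolding sBI_def c'_def by (rule sum.cong) auto
      have s'2: "sum c' (B - I) + q = sBD"
      proof -
        have e1: "sum c' (B - I) = (\<Sum>x\<in>B - I. c x - 1)"
          unfolding c'_def by (rule sum.cong) auto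
        have e2: "(\<Sum>x\<in>B - I. Suc (c x - 1)) = (\<Sum>x\<in>B - I. c x - 1) + card (B - I)"
          by (rule sum_Suc)
        have e3: "(\<Sum>x\<in>B - I. Suc (c x - 1)) = sBD" unfolding sBD_def
        proof (rule sum.cong[OF refl])
          fix x assume "x \<in> B - I"
          then have "1 \<le> c x" using pos B by blast
          then show "Suc (c x - 1) = c x" by simp
        qed
        show ?thesis using e1 e2 e3 unfolding q_def by simp
      qed
      have s': "sum c' B + q = sBI + sBD"
        using sum.Int_Diff[OF fB, of c' I] s'1 s'2 by simp
      have BV: "B \<subseteq> V" using B V'_def by blast
      have main: "b * (b - 1) + 2 * q \<le> 2 * (sBI + sBD)"
      proof (cases "q = 0")
        case True
        have "card B * (card B - 1) \<le> 2 * sum c B" using cV BV by blast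
        then show ?thesis using True sB unfolding b_def by simp
      next
        case qpos: False
        show ?thesis
        proof (cases "t \<le> r")
          case True
          have "insert v B \<subseteq> V" using BV v(1) by blast
          then have h: "card (insert v B) * (card (insert v B) - 1) \<le> 2 * sum c (insert v B)"
            using cV by blast
          have vB: "v \<notin> B" using B vV' by blast
          have "card (insert v B) = b + 1" using vB fB b_def by simp
          moreover have "sum c (insert v B) = t + (sBI + sBD)" using vB fB sB t_def by simp
          ultimately have "(b+1)*(b+1-1) \<le> 2*(t + (sBI+sBD))" using h by simp
          then show ?thesis using arithA_nat[of b t "sBI+sBD" r q] True b_eq by simp
        next
          case False
          have "B - I \<noteq> {}"
          proof
            assume "B - I = {}" then have "q = 0" unfolding q_def by (metis card.empty)
            then show False using qpos by simp
          qed
          then have "I \<noteq> V'" using B by blast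
          then have "I \<subset> V'" using I(1) by blast
          then have "card I < card V'" using fV' by (simp add: psubset_card_mono)
          then have ctI: "card I = t" using I(2) tt_def by simp
          define p where "p = card (I - B)"
          have t_eq: "t = r + p"
          proof -
            have "card I = card (I \<inter> B) + card (I - B)" using fI by (rule card_Int_Diff)
            then show ?thesis using ctI unfolding r_def p_def by (simp add: Int_commute)
          qed
          have ppos: "1 \<le> p" using False t_eq by simp
          have IBne: "I - B \<noteq> {}"
          proof
            assume "I - B = {}" then have "p = 0" unfolding p_def by (metis card.empty)
            then show False using ppos by simp
          qed
          have fIB: "finite (I - B)" using fI by simp
          define M where "M = Max (c ` (I - B))"
          have "M \<in> c ` (I - B)" unfolding M_def using fIB IBne by simp
          then obtain x0 where x0: "x0 \<in> I - B" "c x0 = M" by auto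
          have leM: "\<forall>x\<in>I - B. c x \<le> M" unfolding M_def using fIB by simp
          have geM: "\<forall>y\<in>B - I. M \<le> c y" using I(3) x0 B by auto
          define sIB where "sIB = sum c (I - B)"
          have h3: "sIB \<le> p * M" unfolding sIB_def p_def
            using sum_bounded_above[of "I - B" c M] leM by simp
          have h2: "q * M \<le> sBD" unfolding sBD_def q_def
            using sum_bounded_below[of "B - I" M c] geM by simp
          have "B \<inter> I \<subseteq> V" using BV by blast
          then have h1: "r * (r - 1) \<le> 2 * sBI" using cV unfolding r_def sBI_def by blast
          define X where "X = insert v (B \<union> (I - B))"
          have XV: "X \<subseteq> V" unfolding X_def using BV I(1) V'_def v(1) by blast
          then have h: "card X * (card X - 1) \<le> 2 * sum c X" using cV by blast
          have vX: "v \<notin> B \<union> (I - B)" using B I(1) vV' by blast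
          have dj: "B \<inter> (I - B) = {}" by blast
          have fU: "finite (B \<union> (I - B))" using fB fIB by blast
          have cU: "card (B \<union> (I - B)) = card B + card (I - B)"
            by (rule card_Un_disjoint) (use fB fIB dj in auto)
          have sU: "sum c (B \<union> (I - B)) = sum c B + sum c (I - B)"
            by (rule sum.union_disjoint) (use fB fIB dj in auto)
          have cX: "card X = b + p + 1"
            unfolding X_def b_def p_def using card_insert_disjoint[OF fU vX] cU by simp
          have sX: "sum c X = t + (sBI + sBD + sIB)"
            unfolding X_def sIB_def using sum.insert[OF fU vX, of c] sU sB t_def by simp
          have h4: "(b+p+1)*(b+p+1-1) \<le> 2*(t + (sBI + sBD + sIB))" using h cX sX by simp
          show ?thesis
            using arithB_nat[of b q r t p sBI M sBD sIB] b_eq t_eq ppos qpos h1 h2 h3 h4 by simp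
        qed
      qed
      have gen: "\<And>X::nat. X + 2 * q \<le> 2 * (sBI + sBD) \<Longrightarrow> X \<le> 2 * sum c' B"
        using s' by arith
      show "card B * (card B - 1) \<le> 2 * sum c' B" using gen main unfolding b_def by blast
    qed
    have "card V' < card V" using cardV by simp
    then obtain R' where R': "tourn V' R'" "\<forall>x\<in>V'. card {u\<in>V'. R' u x} \<le> c' x"
      using less.hyps[OF _ fV' cond'] by blast
    have tt': "\<forall>u w. R' u w \<longrightarrow> u \<in> V' \<and> w \<in> V' \<and> u \<noteq> w"
      "\<forall>x\<in>V'. \<forall>w\<in>V'. x \<noteq> w \<longrightarrow> R' x w \<or> R' w x" "\<forall>x w. R' x w \<longrightarrow> \<not> R' w x"
      using R'(1) unfolding tourn_def by blast+
    define R where "R x y = (R' x y \<or> (x \<in> I \<and> y = v) \<or> (x = v \<and> y \<in> V' - I))" for x y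
    have tR: "tourn V R" unfolding tourn_def
    proof (intro conjI)
      show "\<forall>x y. R x y \<longrightarrow> x \<in> V \<and> y \<in> V \<and> x \<noteq> y"
        unfolding R_def using tt'(1) I(1) vV' v(1) V'_def by blast
    next
      show "\<forall>x\<in>V. \<forall>y\<in>V. x \<noteq> y \<longrightarrow> R x y \<or> R y x"
      proof (intro ballI impI)
      fix x y assume xy: "x \<in> V" "y \<in> V" "x \<noteq> y"
      show "R x y \<or> R y x"
      proof (cases "x = v")
        case True then show ?thesis unfolding R_def using xy V'_def by blast
      next
        case xv: False
        show ?thesis
        proof (cases "y = v")
          case True then show ?thesis unfolding R_def using xy xv V'_def by blast
        next
          case False
          then have "x \<in> V'" "y \<in> V'" using xy xv V'_def by auto
          then show ?thesis unfolding R_def using tt'(2) xy(3) by blast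
        qed
      qed
      qed
    next
      show "\<forall>x y. R x y \<longrightarrow> \<not> R y x" unfolding R_def using tt'(1) tt'(3) I(1) vV' by blast
    qed
    have deg: "card {u\<in>V. R u x} \<le> c x" if x: "x \<in> V" for x
    proof (cases "x = v")
      case True
      have "{u\<in>V. R u x} = I" unfolding R_def True using tt'(1) vV' I(1) V'_def by blast
      then show ?thesis using I(2) tt_def t_def True by simp
    next
      case False
      then have xV': "x \<in> V'" using x V'_def by blast
      have sub: "{u\<in>V. R u x} \<subseteq> insert v {u\<in>V'. R' u x}"
        unfolding R_def using False V'_def by blast
      have fin: "finite {u\<in>V'. R' u x}" using fV' by simp
      show ?thesis
      proof (cases "x \<in> I")
        case True
        then have "{u\<in>V. R u x} \<subseteq> {u\<in>V'. R' u x}"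
          unfolding R_def using False V'_def tt'(1) by blast
        then have "card {u\<in>V. R u x} \<le> card {u\<in>V'. R' u x}" using fin by (rule card_mono[rotated])
        then show ?thesis using R'(2) xV' True c'_def by fastforce
      next
        case nI: False
        have "card {u\<in>V. R u x} \<le> card (insert v {u\<in>V'. R' u x})"
          using sub fin by (intro card_mono) auto
        also have "\<dots> \<le> Suc (card {u\<in>V'. R' u x})" using fin by (simp add: card_insert_if)
        finally have "card {u\<in>V. R u x} \<le> Suc (c' x)" using R'(2) xV' by fastforce
        then show ?thesis using nI c'_def pos[OF xV'] by simp
      qed
    qed
    show ?thesis using tR deg by blast
  qed
qed

theorem theorem5p6:
  fixes n :: nat
  assumes "n \<ge> 3"
  shows "PSR n (n - 2) = StoRec n"
proof
  show "PSR n (n - 2) \<subseteq> StoRec n"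
    unfolding PSR_def StoRec_def using star_mono by blast
next
  show "StoRec n \<subseteq> PSR n (n - 2)"
  proof
    fix c assume "c \<in> StoRec n"
    then have r: "(psr_step n n)\<^sup>*\<^sup>* (cmax n) c" and st: "stable n c"
      unfolding StoRec_def PSR_def by auto
    have zc: "zout n c" and cc: "condV {1..n} c" using reach_inv[OF r] by auto
    obtain R where R: "tourn {1..n} R" "\<forall>x\<in>{1..n}. card {u\<in>{1..n}. R u x} \<le> c x"
      using landau[OF _ cc] by auto
    obtain C where C: "(psr_step n (n-2))\<^sup>*\<^sup>* (cmax n) C" "zout n C"
      "\<forall>x\<in>{1..n}. C x = card {w \<in> {1..n}. R w x}"
      using tourn_reach[OF assms R(1)] by blast
    have "(psr_step n (n-2))\<^sup>*\<^sup>* C c" by (rule upward) (use C R zc in auto)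
    then have "(psr_step n (n-2))\<^sup>*\<^sup>* (cmax n) c" using C(1) by (meson rtranclp_trans)
    then show "c \<in> PSR n (n - 2)" unfolding PSR_def using st by blast
  qed
qed

end
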